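(* Let $p$ be prime, $q$ a power of $p$, $R=\mathbb{F}_q[x^p]$, and $V=\{c':c\in\mathbb{F}_q[x]\}=R\oplus xR\oplus\cdots\oplus x^{p-2}R\subset\mathbb{F}_q[x]$ (a free $R$-module of rank $p-1$). For a nonzero squarefree $Q\in\mathbb{F}_q[x]$ let $\Lambda_Q=Q\mathbb{F}_q[x]\cap V$. Then $\Lambda_Q$ is an $R$-submodule of $V$ of index $[V:\Lambda_Q]=q^{\deg Q}$.
   Context: $c'$ denotes the formal derivative of $c\in\mathbb{F}_q[x]$. *)

theory Defs
  imports "HOL-Computational_Algebra.Polynomial" "HOL-Computational_Algebra.Squarefree"
begin

definition Rxp :: "nat \<Rightarrow> 'a::field poly set" where
  "Rxp p = {r. \<forall>i. coeff r i \<noteq> 0 \<longrightarrow> p dvd i}"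

definition Vder :: "'a::field poly set" where
  "Vder = {pderiv c | c. True}"

definition LambdaQ :: "'a::field poly \<Rightarrow> 'a poly set" where
  "LambdaQ Q = {f \<in> Vder. Q dvd f}"

definition index_in_V :: "'a::field poly set \<Rightarrow> nat" where
  "index_in_V L = card (Vder // {(f, g). f \<in> Vder \<and> g \<in> Vder \<and> f - g \<in> L})"

end

theory Submission
  imports Defs "HOL-Computational_Algebra.Computational_Algebra" "HOL-Library.FuncSet"
begin

lemma frob_surj:
  fixes y :: "'a::{finite,field}"
  assumes "prime CHAR('a)"
  shows "\<exists>x. x ^ CHAR('a) = y"
proof -
  have "inj (\<lambda>x::'a. x ^ CHAR('a))"
  proof (rule injI)
    fix x z :: 'a assume h: "x ^ CHAR('a) = z ^ CHAR('a)"
    have "(x + - z) ^ CHAR('a) = x ^ CHAR('a) + (- z) ^ CHAR('a)"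
      by (rule freshmans_dream[OF assms refl])
    also have "(- z) ^ CHAR('a) = - (z ^ CHAR('a))"
      by (rule minus_power_prime_CHAR[OF refl assms])
    finally have "(x - z) ^ CHAR('a) = 0" using h by simp
    thus "x = z" by simp
  qed
  hence "surj (\<lambda>x::'a. x ^ CHAR('a))" by (rule finite_UNIV_inj_surj[OF finite_UNIV])
  thus ?thesis by (metis surjD)
qed

lemma pderiv0_coeff:
  fixes P :: "'a::field poly"
  assumes "pderiv P = 0" "coeff P i \<noteq> 0"
  shows "CHAR('a) dvd i"
proof (cases i)
  case (Suc n)
  have "of_nat (Suc n) * coeff P (Suc n) = (0::'a)"
    using assms(1) by (metis coeff_pderiv coeff_0)
  hence "of_nat (Suc n) = (0::'a)" using assms(2) Suc by simp
  thus ?thesis using Suc of_nat_eq_0_iff_char_dvd by blast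
qed simp

lemma pderiv0_pth_power:
  fixes P :: "'a::{finite,field} poly"
  assumes pr: "prime CHAR('a)" and d: "pderiv P = 0"
  shows "\<exists>S. P = S ^ CHAR('a)"
proof -
  define p where "p = CHAR('a)"
  have p0: "p > 0" using pr p_def prime_gt_0_nat by blast
  define b where "b j = (SOME x. x ^ p = coeff P (j * p))" for j
  have b: "b j ^ p = coeff P (j * p)" for j
    unfolding b_def p_def by (rule someI_ex, rule frob_surj[OF pr])
  define N where "N = degree P"
  define S where "S = (\<Sum>j\<le>N. monom (b j) j)"
  have "S ^ p = (\<Sum>j\<le>N. monom (b j) j ^ p)"
    unfolding S_def p_def by (rule freshmans_dream_sum) (simp_all add: pr)
  also have "\<dots> = (\<Sum>j\<le>N. monom (coeff P (j * p)) (j * p))"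
    by (simp add: monom_power b)
  also have "\<dots> = P"
  proof (rule poly_eqI)
    fix i
    have eq: "(j * p = i) \<longleftrightarrow> (p dvd i \<and> j = i div p)" for j
      using p0 by auto
    have "coeff (\<Sum>j\<le>N. monom (coeff P (j * p)) (j * p)) i
        = (\<Sum>j\<le>N. if j = i div p \<and> p dvd i then coeff P (j * p) else 0)"
      by (simp add: coeff_sum coeff_monom eq conj_commute)
    also have "\<dots> = (if p dvd i \<and> i div p \<le> N then coeff P i else 0)"
      by (auto simp: sum.delta' intro: sum.neutral)
    also have "\<dots> = coeff P i"
    proof (cases "p dvd i")
      case True
      show ?thesis
      proof (cases "i div p \<le> N")
        case False
        hence "i > N" using p0 by (meson div_le_dividend le_trans not_le)
        thus ?thesis using False by (simp add: N_def coeff_eq_0)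
      qed (use True in auto)
    next
      case False
      thus ?thesis using pderiv0_coeff[OF d, of i] p_def by auto
    qed
    finally show "coeff (\<Sum>j\<le>N. monom (coeff P (j * p)) (j * p)) i = coeff P i" .
  qed
  finally show ?thesis unfolding p_def by metis
qed



lemma bezout_poly:
  fixes A B :: "'a::field poly"
  shows "\<exists>g u v. g = u * A + v * B \<and> g dvd A \<and> g dvd B"
proof (induction B arbitrary: A rule: measure_induct_rule[where f = "\<lambda>B. if B = 0 then 0 else Suc (degree B)"])
  case (less B A)
  show ?case
  proof (cases "B = 0")
    case True
    then show ?thesis by (intro exI[of _ A] exI[of _ 1] exI[of _ 0]) auto
  next
    case False
    have "(if A mod B = 0 then 0 else Suc (degree (A mod B))) < (if B = 0 then 0 else Suc (degree B))"
      using False degree_mod_less[OF False, of A] by auto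
    from less[OF this, of B] obtain g u v where
      g: "g = u * B + v * (A mod B)" "g dvd B" "g dvd A mod B" by blast
    have A: "A = (A div B) * B + A mod B" by simp
    have m: "A mod B = A - (A div B) * B" by (simp add: minus_div_mult_eq_mod)
    have "g = v * A + (u - v * (A div B)) * B"
      using g(1) unfolding m by (simp add: algebra_simps)
    moreover have "g dvd A" using g(2,3) by (metis A dvd_add dvd_mult)
    ultimately show ?thesis using g(2) by blast
  qed
qed


lemma const_unit_poly:
  fixes h :: "'a::field poly"
  assumes "h \<noteq> 0" "degree h = 0"
  shows "\<exists>c. c \<noteq> 0 \<and> smult (inverse c) h = 1"
proof -
  obtain c where c: "h = [:c:]" using assms(2) by (metis degree_eq_zeroE)
  have "c \<noteq> 0" using assms(1) c by simp
  thus ?thesis using c by (intro exI[of _ c]) (simp add: one_pCons)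
qed

lemma sqfree_bezout:
  fixes Q :: "'a::{finite,field} poly"
  assumes pr: "prime CHAR('a)" and Q0: "Q \<noteq> 0" and sf: "squarefree Q"
  shows "\<exists>u v. u * pderiv Q + v * Q = 1"
proof -
  obtain g u v where g: "g = u * Q + v * pderiv Q" "g dvd Q" "g dvd pderiv Q"
    using bezout_poly by blast
  have g0: "g \<noteq> 0" using g(2) Q0 by auto
  show ?thesis
  proof (cases "degree g = 0")
    case True
    then obtain c where c: "c \<noteq> 0" "smult (inverse c) g = 1" using const_unit_poly g0 by blast
    have "smult (inverse c) v * pderiv Q + smult (inverse c) u * Q = 1"
      using c(2) unfolding g(1) by (simp add: algebra_simps smult_add_right)
    thus ?thesis by blast
  next
    case False
    define m where "m = (LEAST n. \<exists>P. P dvd g \<and> degree P = n \<and> n > 0)"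
    have ex: "\<exists>n. \<exists>P. P dvd g \<and> degree P = n \<and> n > 0" using False by (intro exI[of _ "degree g"] exI[of _ g]) auto
    obtain P where P: "P dvd g" "degree P = m" "m > 0"
      using LeastI_ex[of "\<lambda>n. \<exists>P. P dvd g \<and> degree P = n \<and> n > 0", OF ex]
      unfolding m_def by blast
    have min: "m \<le> degree R" if "R dvd g" "degree R > 0" for R
      unfolding m_def using that by (intro Least_le) blast
    have P0: "P \<noteq> 0" using P by auto
    have prm: "P dvd T" if ST: "P dvd S * T" and nS: "\<not> P dvd S" for S T
    proof -
      obtain h a b where h: "h = a * P + b * S" "h dvd P" "h dvd S"
        using bezout_poly by blast
      have h0: "h \<noteq> 0" using h(2) P0 by auto
      show ?thesis
      proof (cases "degree h = 0")
        case True
        then obtain c where c: "c \<noteq> 0" "smult (inverse c) h = 1" using const_unit_poly h0 by blast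
        have "T = smult (inverse c) h * T" using c by simp
        also have "\<dots> = P * (smult (inverse c) a * T) + smult (inverse c) b * (S * T)"
          unfolding h(1) by (simp add: algebra_simps smult_add_right)
        finally show ?thesis using ST by (metis dvd_add dvd_mult dvd_triv_left)
      next
        case False
        have "h dvd g" using h(2) P(1) by (rule dvd_trans)
        hence "m \<le> degree h" using min False by blast
        moreover have "degree h \<le> degree P" using h(2) P0 by (rule dvd_imp_degree_le)
        ultimately have eqd: "degree h = degree P" using P(2) by simp
        obtain k where k: "P = h * k" using h(2) by (auto elim: dvdE)
        have k0: "k \<noteq> 0" using k P0 by auto
        have "degree P = degree h + degree k" using k h0 k0 by (simp add: degree_mult_eq)
        hence "degree k = 0" using eqd by simp
        then obtain d where d: "d \<noteq> 0" "smult (inverse d) k = 1" using const_unit_poly k0 by blast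
        have "h = smult (inverse d) P" using k d by (metis mult.right_neutral mult_smult_right)
        hence "P dvd h" by (simp add: dvd_smult)
        hence "P dvd S" using h(3) by (rule dvd_trans)
        thus ?thesis using nS by blast
      qed
    qed
    have PQ: "P dvd Q" using P(1) g(2) by (rule dvd_trans)
    have PQ': "P dvd pderiv Q" using P(1) g(3) by (rule dvd_trans)
    obtain S where S: "Q = P * S" using PQ by (auto elim: dvdE)
    have "pderiv Q = P * pderiv S + S * pderiv P" using S pderiv_mult by simp
    hence "P dvd S * pderiv P" using PQ' by (metis dvd_add_right_iff dvd_triv_left)
    moreover have "\<not> P dvd S"
    proof
      assume "P dvd S"
      then obtain T where "S = P * T" by (auto elim: dvdE)
      hence "P ^ 2 dvd Q" using S by (simp add: power2_eq_square)
      hence "is_unit P" using sf unfolding squarefree_def by blast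
      thus False using P P0 by (simp add: is_unit_iff_degree)
    qed
    ultimately have "P dvd pderiv P" using prm by blast
    have "pderiv P = 0"
    proof (rule ccontr)
      assume nz: "pderiv P \<noteq> 0"
      have "degree P \<le> degree (pderiv P)" using \<open>P dvd pderiv P\<close> nz by (rule dvd_imp_degree_le)
      moreover have "degree (pderiv P) \<le> degree P - 1"
        by (rule degree_le) (auto simp: coeff_pderiv coeff_eq_0)
      ultimately show False using P by simp
    qed
    then obtain R where R: "P = R ^ CHAR('a)" using pderiv0_pth_power[OF pr] by blast
    have c2: "CHAR('a) \<ge> 2" using pr prime_ge_2_nat by blast
    have R0: "R \<noteq> 0" using R P0 c2 by (cases "CHAR('a)") auto
    have dP: "degree P = CHAR('a) * degree R" using R R0 by (simp add: degree_power_eq)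
    have dR: "degree R > 0" using dP P by auto
    have "R dvd P" using R c2 by (simp add: dvd_power)
    hence "R dvd g" using P(1) by (rule dvd_trans)
    hence "m \<le> degree R" using min dR by blast
    moreover have "degree R < CHAR('a) * degree R" using c2 dR by simp
    ultimately show ?thesis using dP P(2) by simp
  qed
qed


lemma card_lowdeg:
  "card {r::'a::{finite,field} poly. \<forall>i\<ge>n. coeff r i = 0} = card (UNIV::'a set) ^ n"
proof -
  let ?B = "{r::'a poly. \<forall>i\<ge>n. coeff r i = 0}"
  let ?f = "\<lambda>r::'a poly. restrict (coeff r) {..<n}"
  have inj: "inj_on ?f ?B"
  proof (rule inj_onI)
    fix r s assume r: "r \<in> ?B" and s: "s \<in> ?B" and e: "?f r = ?f s"
    show "r = s"
    proof (rule poly_eqI)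
      fix i show "coeff r i = coeff s i"
      proof (cases "i < n")
        case True thus ?thesis using fun_cong[OF e, of i] by simp
      next
        case False thus ?thesis using r s by simp
      qed
    qed
  qed
  have img: "?f ` ?B = PiE {..<n} (\<lambda>_. UNIV)"
  proof
    show "?f ` ?B \<subseteq> PiE {..<n} (\<lambda>_. UNIV)"
      by (rule image_subsetI) (simp only: restrict_PiE_iff, simp)
  next
    show "PiE {..<n} (\<lambda>_. UNIV) \<subseteq> ?f ` ?B"
    proof
      fix f assume f: "f \<in> PiE {..<n} (\<lambda>_. (UNIV::'a set))"
      let ?r = "Poly (map f [0..<n])"
      have cr: "coeff ?r i = (if i < n then f i else 0)" for i
        by (simp add: nth_default_def)
      have rB: "?r \<in> ?B" using cr by simp
      have rf: "?f ?r = f"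
      proof
        fix x show "?f ?r x = f x"
          using f cr[of x] PiE_arb[OF f, of x] by (cases "x < n") simp_all
      qed
      show "f \<in> ?f ` ?B" by (rule image_eqI[where f = ?f and x = ?r, OF rf[symmetric] rB])
    qed
  qed
  have "card ?B = card (?f ` ?B)" using inj by (simp add: card_image)
  also have "\<dots> = card (UNIV::'a set) ^ n" unfolding img by (simp add: card_PiE)
  finally show ?thesis .
qed

lemma quotient_card_kernel:
  "card (A // {(f,g). f\<in>A \<and> g\<in>A \<and> h f = h g}) = card (h ` A)"
proof -
  let ?r = "{(f,g). f\<in>A \<and> g\<in>A \<and> h f = h g}"
  let ?F = "\<lambda>y. {b\<in>A. h b = y}"
  have "A // ?r = ?F ` (h ` A)"
  proof
    show "A // ?r \<subseteq> ?F ` (h ` A)"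
    proof
      fix X assume "X \<in> A // ?r"
      then obtain a where a: "a \<in> A" "X = ?r `` {a}" by (auto simp: quotient_def)
      hence "X = ?F (h a)" by auto
      thus "X \<in> ?F ` (h ` A)" using a by blast
    qed
  next
    show "?F ` (h ` A) \<subseteq> A // ?r"
    proof
      fix X assume "X \<in> ?F ` (h ` A)"
      then obtain a where a: "a \<in> A" "X = ?F (h a)" by blast
      hence "X = ?r `` {a}" by auto
      thus "X \<in> A // ?r" using a by (auto simp: quotient_def)
    qed
  qed
  moreover have "inj_on ?F (h ` A)"
    by (rule inj_onI) blast
  ultimately show ?thesis by (simp add: card_image)
qed


lemma Rxp_pderiv0:
  fixes r :: "'a::field poly"
  assumes "CHAR('a) = p" "r \<in> Rxp p"
  shows "pderiv r = 0"
proof (rule poly_eqI)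
  fix n
  show "coeff (pderiv r) n = coeff 0 n"
  proof (cases "coeff r (Suc n) = 0")
    case False
    hence "p dvd Suc n" using assms(2) unfolding Rxp_def by blast
    hence "(of_nat (Suc n) :: 'a) = 0" using assms(1) of_nat_eq_0_iff_char_dvd by blast
    thus ?thesis by (simp add: coeff_pderiv)
  qed (simp add: coeff_pderiv)
qed

lemma surj_mod:
  fixes Q :: "'a::{finite,field} poly"
  assumes pr: "prime CHAR('a)" and Q0: "Q \<noteq> 0" and sf: "squarefree Q"
  shows "\<exists>f\<in>Vder. f mod Q = g mod Q"
proof -
  obtain u v where uv: "u * pderiv Q + v * Q = 1" using sqfree_bezout[OF pr Q0 sf] by blast
  define c where "c = g * u * Q"
  have "pderiv c = (g * u) * pderiv Q + Q * pderiv (g * u)"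
    unfolding c_def by (simp add: pderiv_mult)
  also have "(g * u) * pderiv Q = g - g * v * Q"
    using arg_cong[OF uv, of "\<lambda>x. g * x"] by (simp add: algebra_simps)
  finally have "pderiv c - g = Q * (pderiv (g * u) - g * v)" by (simp add: algebra_simps)
  hence "pderiv c mod Q = g mod Q" by (simp add: mod_eq_dvd_iff)
  moreover have "pderiv c \<in> Vder" unfolding Vder_def by blast
  ultimately show ?thesis by blast
qed

theorem mainTheorem16:
  fixes Q :: "'a::{finite, field} poly" and p :: nat
  assumes "prime p" and "CHAR('a) = p"
    and "Q \<noteq> 0" and "squarefree Q"
  shows "LambdaQ Q \<subseteq> Vder
       \<and> 0 \<in> LambdaQ Q
       \<and> (\<forall>f\<in>LambdaQ Q. \<forall>g\<in>LambdaQ Q. f + g \<in> LambdaQ Q \<and> f - g \<in> LambdaQ Q)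
       \<and> (\<forall>r\<in>Rxp p. \<forall>f\<in>LambdaQ Q. r * f \<in> LambdaQ Q)
       \<and> index_in_V (LambdaQ Q) = card (UNIV :: 'a set) ^ degree Q"
proof -
  have pr: "prime CHAR('a)" using assms by simp
  have V0: "0 \<in> Vder" unfolding Vder_def by (auto intro: exI[of _ 0])
  have Vadd: "f + g \<in> Vder" if fg: "f \<in> Vder" "g \<in> Vder" for f g :: "'a poly"
  proof -
    obtain a b where "f = pderiv a" "g = pderiv b" using fg unfolding Vder_def by blast
    hence "f + g = pderiv (a + b)" by (simp add: pderiv_add)
    thus ?thesis unfolding Vder_def by blast
  qed
  have Vdiff: "f - g \<in> Vder" if fg: "f \<in> Vder" "g \<in> Vder" for f g :: "'a poly"
  proof -
    obtain a b where "f = pderiv a" "g = pderiv b" using fg unfolding Vder_def by blast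
    hence "f - g = pderiv (a - b)" by (simp add: pderiv_diff)
    thus ?thesis unfolding Vder_def by blast
  qed
  have Vmul: "r * f \<in> Vder" if rf: "r \<in> Rxp p" "f \<in> Vder" for r f :: "'a poly"
  proof -
    obtain a where "f = pderiv a" using rf unfolding Vder_def by blast
    hence "r * f = pderiv (r * a)" using Rxp_pderiv0[OF assms(2) rf(1)] by (simp add: pderiv_mult)
    thus ?thesis unfolding Vder_def by blast
  qed
  have part1: "LambdaQ Q \<subseteq> Vder" unfolding LambdaQ_def by blast
  have part2: "0 \<in> LambdaQ Q" unfolding LambdaQ_def using V0 by simp
  have part3: "\<forall>f\<in>LambdaQ Q. \<forall>g\<in>LambdaQ Q. f + g \<in> LambdaQ Q \<and> f - g \<in> LambdaQ Q"
    unfolding LambdaQ_def using Vadd Vdiff by auto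
  have part4: "\<forall>r\<in>Rxp p. \<forall>f\<in>LambdaQ Q. r * f \<in> LambdaQ Q"
    unfolding LambdaQ_def using Vmul by auto
  let ?h = "\<lambda>f. f mod Q"
  have rel: "{(f, g). f \<in> Vder \<and> g \<in> Vder \<and> f - g \<in> LambdaQ Q}
           = {(f, g). f \<in> Vder \<and> g \<in> Vder \<and> ?h f = ?h g}"
    unfolding LambdaQ_def using Vdiff by (auto simp: mod_eq_dvd_iff)
  have img: "?h ` Vder = {r::'a poly. \<forall>i\<ge>degree Q. coeff r i = 0}"
  proof
    show "?h ` Vder \<subseteq> {r::'a poly. \<forall>i\<ge>degree Q. coeff r i = 0}"
    proof (rule image_subsetI, clarify)
      fix f i assume "i \<ge> degree Q"
      show "coeff (f mod Q) i = 0"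
      proof (cases "f mod Q = 0")
        case False
        hence "degree (f mod Q) < degree Q" using degree_mod_less[OF assms(3), of f] by simp
        thus ?thesis using \<open>i \<ge> degree Q\<close> by (simp add: coeff_eq_0)
      qed simp
    qed
  next
    show "{r::'a poly. \<forall>i\<ge>degree Q. coeff r i = 0} \<subseteq> ?h ` Vder"
    proof
      fix r assume r: "r \<in> {r::'a poly. \<forall>i\<ge>degree Q. coeff r i = 0}"
      have "r mod Q = r"
      proof (cases "r = 0")
        case False
        have "coeff r (degree r) \<noteq> 0" using False by simp
        hence "degree r < degree Q" using r by (simp only: mem_Collect_eq) (meson not_le)
        thus ?thesis by (rule mod_poly_less)
      qed simp
      moreover obtain f where f: "f \<in> Vder" "f mod Q = r mod Q"
        using surj_mod[OF pr assms(3,4)] by blast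
      ultimately have "r = ?h f" by simp
      thus "r \<in> ?h ` Vder" using f(1) by (rule image_eqI)
    qed
  qed
  have "index_in_V (LambdaQ Q) = card (UNIV :: 'a set) ^ degree Q"
    unfolding index_in_V_def rel quotient_card_kernel img card_lowdeg ..
  with part1 part2 part3 part4 show ?thesis by blast
qed

end
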